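(* Consider the TAR(1) model $Y_t=\alpha Y_{t-1}+\varepsilon_t$ if $Y_{t-1}>r$, $Y_t=\beta Y_{t-1}+\varepsilon_t$ if $Y_{t-1}\le r$ ($t\ge1$), and assume one of: (H1) $\alpha>1$, $\beta\le1$, $r=0$ and $\mathbb{E}Y_0^2<\infty$; (H2) $\alpha>1$, $\beta\le 1$, $r\ne0$, $\mathbb{E}Y_0^2<\infty$, and $\mathbb{P}(\varepsilon_1\le x)<1$ for every $x\in\mathbb{R}$. Then (i) $\mathbb{E}|Y_n|=O(\alpha^n)$ as $n\to\infty$; and (ii) if $\limsup_{n\to\infty}Y_n=\infty$ a.s., then $\lim_{n\to\infty}Y_n/n=\infty$ a.s.
   Context: Standing assumptions: $\{\varepsilon_t\}_{t\ge1}$ is an i.i.d. sequence of real random variables with $\mathbb{E}\varepsilon_1=0$ and $\mathbb{E}\varepsilon_1^2=\sigma^2\in(0,\infty)$; the initial value $Y_0$ is a random variable independent of $\{\varepsilon_t\}_{t\ge1}$. *)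

theory Defs
  imports "HOL-Probability.Probability" "HOL-Library.Landau_Symbols"
begin

fun tar :: "real \<Rightarrow> real \<Rightarrow> real \<Rightarrow> ('a \<Rightarrow> real) \<Rightarrow> (nat \<Rightarrow> 'a \<Rightarrow> real) \<Rightarrow> nat \<Rightarrow> 'a \<Rightarrow> real" where
  "tar \<alpha> \<beta> r Y0 \<epsilon> 0 \<omega> = Y0 \<omega>"
| "tar \<alpha> \<beta> r Y0 \<epsilon> (Suc n) \<omega> =
     (if tar \<alpha> \<beta> r Y0 \<epsilon> n \<omega> > r then \<alpha> * tar \<alpha> \<beta> r Y0 \<epsilon> n \<omega>
      else \<beta> * tar \<alpha> \<beta> r Y0 \<epsilon> n \<omega>) + \<epsilon> (Suc n) \<omega>"

end

theory Submission
  imports Defs "HOL-Real_Asymp.Real_Asymp"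
begin


lemma tar_meas:
  assumes "\<And>t. t \<ge> 1 \<Longrightarrow> \<epsilon> t \<in> borel_measurable M" "Y0 \<in> borel_measurable M"
  shows "tar \<alpha> \<beta> r Y0 \<epsilon> n \<in> borel_measurable M"
proof (induction n)
  case 0 then show ?case using assms by simp
next
  case (Suc n)
  have e: "\<epsilon> (Suc n) \<in> borel_measurable M" using assms by simp
  show ?case using Suc e by simp
qed

lemma abs_step:
  fixes \<alpha> \<beta> r y e :: real
  shows "\<bar>(if y > r then \<alpha>*y else \<beta>*y) + e\<bar> \<le> (\<bar>\<alpha>\<bar>+\<bar>\<beta>\<bar>) * \<bar>y\<bar> + \<bar>e\<bar>"
proof -
  have a: "\<bar>\<alpha> * y\<bar> \<le> (\<bar>\<alpha>\<bar>+\<bar>\<beta>\<bar>) * \<bar>y\<bar>" unfolding abs_mult by (intro mult_right_mono) auto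
  have b: "\<bar>\<beta> * y\<bar> \<le> (\<bar>\<alpha>\<bar>+\<bar>\<beta>\<bar>) * \<bar>y\<bar>" unfolding abs_mult by (intro mult_right_mono) auto
  have "\<bar>(if y > r then \<alpha>*y else \<beta>*y)\<bar> \<le> (\<bar>\<alpha>\<bar>+\<bar>\<beta>\<bar>) * \<bar>y\<bar>" using a b by simp
  then show ?thesis by (smt (verit) abs_triangle_ineq)
qed

lemma max0_le: "(a::real) \<le> b \<Longrightarrow> 0 \<le> b \<Longrightarrow> max 0 a \<le> b" by simp

lemma neg_step:
  fixes \<alpha> \<beta> r y e :: real
  assumes "\<alpha> > 1" "\<beta> \<le> 1"
  shows "max 0 (-((if y > r then \<alpha>*y else \<beta>*y) + e)) \<le> max 0 (-y) + (\<alpha>*\<bar>r\<bar>+\<bar>\<beta>\<bar>*\<bar>r\<bar>) + \<bar>e\<bar>"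
proof -
  have N0: "max 0 (-y) \<ge> 0" "\<bar>\<beta>\<bar>*\<bar>r\<bar> \<ge> 0" "\<alpha>*\<bar>r\<bar> \<ge> 0" using assms by auto
  have "(if y > r then \<alpha>*y else \<beta>*y) \<ge> - max 0 (-y) - (\<alpha>*\<bar>r\<bar>+\<bar>\<beta>\<bar>*\<bar>r\<bar>)"
  proof (cases "y > r")
    case True
    have "\<alpha>*y \<ge> \<alpha>*r" using True assms by simp
    moreover have "\<alpha>*r \<ge> -(\<alpha>*\<bar>r\<bar>)" using assms by (simp add: abs_if)
    moreover have "(if y > r then \<alpha>*y else \<beta>*y) = \<alpha>*y" using True by simp
    ultimately show ?thesis using N0 by linarith
  next
    case False
    show ?thesis
    proof (cases "\<beta> \<le> 0")
      case True
      have "\<beta>*y \<ge> \<beta>*r" using False True by (simp add: mult_left_mono_neg)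
      moreover have "\<beta>*r \<ge> -(\<bar>\<beta>\<bar>*\<bar>r\<bar>)" by (simp add: abs_if)
      moreover have "(if y > r then \<alpha>*y else \<beta>*y) = \<beta>*y" using False by simp
      ultimately show ?thesis using N0 by linarith
    next
      case b: False
      have "\<beta>*y \<ge> - max 0 (-y)"
      proof (cases "y \<ge> 0")
        case True then show ?thesis using b by simp
      next
        case f: False
        have "(\<beta>-1)*y \<ge> 0" using f assms by (simp add: mult_nonpos_nonpos)
        then show ?thesis using f by (simp add: algebra_simps)
      qed
      moreover have "(if y > r then \<alpha>*y else \<beta>*y) = \<beta>*y" using False by simp
      ultimately show ?thesis using N0 by linarith
    qed
  qed
  then have "-((if y > r then \<alpha>*y else \<beta>*y) + e) \<le> max 0 (-y) + (\<alpha>*\<bar>r\<bar>+\<bar>\<beta>\<bar>*\<bar>r\<bar>) + \<bar>e\<bar>"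
    by (smt (verit) abs_ge_minus_self)
  moreover have "0 \<le> max 0 (-y) + (\<alpha>*\<bar>r\<bar>+\<bar>\<beta>\<bar>*\<bar>r\<bar>) + \<bar>e\<bar>" using N0 by simp
  ultimately show ?thesis by (rule max0_le)
qed

lemma pos_step:
  fixes \<alpha> \<beta> r y e :: real
  assumes "\<alpha> > 1" "\<beta> \<le> 1"
  shows "max 0 ((if y > r then \<alpha>*y else \<beta>*y) + e) \<le> \<alpha> * max 0 y + \<bar>\<beta>\<bar> * max 0 (-y) + \<bar>\<beta>\<bar>*\<bar>r\<bar> + \<bar>e\<bar>"
proof -
  have N0: "\<bar>\<beta>\<bar> * max 0 (-y) \<ge> 0" "\<bar>\<beta>\<bar>*\<bar>r\<bar> \<ge> 0" "\<alpha> * max 0 y \<ge> 0" using assms by auto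
  have "(if y > r then \<alpha>*y else \<beta>*y) \<le> \<alpha> * max 0 y + \<bar>\<beta>\<bar> * max 0 (-y) + \<bar>\<beta>\<bar>*\<bar>r\<bar>"
  proof (cases "y > r")
    case True
    have "\<alpha>*y \<le> \<alpha> * max 0 y" using assms by (intro mult_left_mono) auto
    moreover have "(if y > r then \<alpha>*y else \<beta>*y) = \<alpha>*y" using True by simp
    ultimately show ?thesis using N0 by linarith
  next
    case False
    have "\<beta>*y \<le> \<bar>\<beta>\<bar>*\<bar>y\<bar>" by (simp add: abs_mult[symmetric])
    moreover have "\<bar>\<beta>\<bar>*\<bar>y\<bar> \<le> \<bar>\<beta>\<bar> * max 0 (-y) + \<bar>\<beta>\<bar>*\<bar>r\<bar>"
    proof (cases "y \<ge> 0")
      case True then have "\<bar>y\<bar> \<le> \<bar>r\<bar>" using False by simp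
      then have "\<bar>\<beta>\<bar>*\<bar>y\<bar> \<le> \<bar>\<beta>\<bar>*\<bar>r\<bar>" by (simp add: mult_left_mono)
      then show ?thesis using N0 by linarith
    next
      case f: False then show ?thesis using N0 by simp
    qed
    moreover have "(if y > r then \<alpha>*y else \<beta>*y) = \<beta>*y" using False by simp
    ultimately show ?thesis using N0 by linarith
  qed
  then have "((if y > r then \<alpha>*y else \<beta>*y) + e) \<le> \<alpha> * max 0 y + \<bar>\<beta>\<bar> * max 0 (-y) + \<bar>\<beta>\<bar>*\<bar>r\<bar> + \<bar>e\<bar>"
    by (smt (verit) abs_ge_self)
  moreover have "0 \<le> \<alpha> * max 0 y + \<bar>\<beta>\<bar> * max 0 (-y) + \<bar>\<beta>\<bar>*\<bar>r\<bar> + \<bar>e\<bar>" using N0 by simp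
  ultimately show ?thesis by (rule max0_le)
qed




context prob_space begin

lemma eps_facts:
  fixes \<epsilon> :: "nat \<Rightarrow> 'a \<Rightarrow> real"
  assumes rv_eps: "\<And>t. t \<ge> 1 \<Longrightarrow> \<epsilon> t \<in> borel_measurable M"
    and ident: "\<And>t. t \<ge> 1 \<Longrightarrow> distr M borel (\<epsilon> t) = distr M borel (\<epsilon> 1)"
    and int1: "integrable M (\<epsilon> 1)"
    and t: "t \<ge> 1"
  shows "integrable M (\<epsilon> t)" "expectation (\<lambda>\<omega>. \<bar>\<epsilon> t \<omega>\<bar>) = expectation (\<lambda>\<omega>. \<bar>\<epsilon> 1 \<omega>\<bar>)"
proof -
  have m1: "\<epsilon> 1 \<in> borel_measurable M" and mt: "\<epsilon> t \<in> borel_measurable M" using rv_eps[of 1] rv_eps[OF t] by auto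
  have "integrable (distr M borel (\<epsilon> 1)) (\<lambda>x. x)"
    using integrable_distr_eq[OF m1, of "\<lambda>x. x"] int1 by simp
  then have "integrable (distr M borel (\<epsilon> t)) (\<lambda>x. x)" unfolding ident[OF t] .
  then show "integrable M (\<epsilon> t)"
    using integrable_distr_eq[OF mt, of "\<lambda>x. x"] by simp
  have "expectation (\<lambda>\<omega>. \<bar>\<epsilon> t \<omega>\<bar>) = integral\<^sup>L (distr M borel (\<epsilon> t)) abs"
    using integral_distr[OF mt, of abs] by simp
  also have "\<dots> = integral\<^sup>L (distr M borel (\<epsilon> 1)) abs" unfolding ident[OF t] ..
  also have "\<dots> = expectation (\<lambda>\<omega>. \<bar>\<epsilon> 1 \<omega>\<bar>)"
    using integral_distr[OF m1, of abs] by simp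
  finally show "expectation (\<lambda>\<omega>. \<bar>\<epsilon> t \<omega>\<bar>) = expectation (\<lambda>\<omega>. \<bar>\<epsilon> 1 \<omega>\<bar>)" .
qed

lemma geom_bound:
  fixes a :: "nat \<Rightarrow> real" and \<alpha> u v :: real
  assumes "\<alpha> > 1" "u \<ge> 0" "v \<ge> 0"
    and rec: "\<And>n. a (Suc n) \<le> \<alpha> * a n + u * n + v"
  shows "a n \<le> (a 0 + (v + u/(\<alpha>-1))/(\<alpha>-1)) * \<alpha>^n - u/(\<alpha>-1) * n - (v + u/(\<alpha>-1))/(\<alpha>-1)"
proof (induction n)
  case 0 then show ?case by simp
next
  case (Suc n)
  define s where "s = u/(\<alpha>-1)"
  define t where "t = (v + s)/(\<alpha>-1)"
  define A where "A = a 0 + t"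
  have IH: "a n \<le> A * \<alpha>^n - s*n - t" using Suc unfolding s_def t_def A_def by simp
  have hs: "(\<alpha> - 1) * s = u" using assms(1) unfolding s_def by simp
  have ht: "(\<alpha>-1)*t = v + s" using assms(1) unfolding t_def by simp
  have "a (Suc n) \<le> \<alpha> * a n + u*n + v" by (rule rec)
  also have "\<dots> \<le> \<alpha> * (A * \<alpha>^n - s*n - t) + u*n + v"
    using IH assms(1) by (intro add_right_mono mult_left_mono) auto
  also have "\<dots> = A*\<alpha>^(Suc n) - s*(Suc n) - t + (u - (\<alpha>-1)* s)*n + (v + s - (\<alpha>-1)*t)"
    by (simp add: algebra_simps)
  also have "\<dots> = A*\<alpha>^(Suc n) - s*(Suc n) - t" using hs ht by simp
  finally show ?case unfolding s_def t_def A_def by simp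
qed

lemma part1:
  assumes rv_eps: "\<And>t. t \<ge> 1 \<Longrightarrow> \<epsilon> t \<in> borel_measurable M"
    and rv_Y0: "Y0 \<in> borel_measurable M"
    and ident: "\<And>t. t \<ge> 1 \<Longrightarrow> distr M borel (\<epsilon> t) = distr M borel (\<epsilon> 1)"
    and int1: "integrable M (\<epsilon> 1)"
    and Y0sq: "integrable M (\<lambda>\<omega>. (Y0 \<omega>)\<^sup>2)"
    and a1: "\<alpha> > 1" and b1: "\<beta> \<le> 1"
  shows "(\<forall>n. integrable M (tar \<alpha> \<beta> r Y0 \<epsilon> n)) \<and>
          (\<lambda>n. expectation (\<lambda>\<omega>. \<bar>tar \<alpha> \<beta> r Y0 \<epsilon> n \<omega>\<bar>)) \<in> O(\<lambda>n. \<alpha> ^ n)"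
proof -
  define Y where "Y = tar \<alpha> \<beta> r Y0 \<epsilon>"
  have Ym[measurable]: "Y n \<in> borel_measurable M" for n
    unfolding Y_def by (rule tar_meas) (auto intro: rv_eps rv_Y0)
  have Ysuc: "Y (Suc n) \<omega> = (if Y n \<omega> > r then \<alpha> * Y n \<omega> else \<beta> * Y n \<omega>) + \<epsilon> (Suc n) \<omega>" for n \<omega>
    by (simp add: Y_def)
  have Y0eq: "Y 0 = Y0" by (simp add: Y_def fun_eq_iff)
  have em[measurable]: "\<epsilon> (Suc n) \<in> borel_measurable M" for n using rv_eps by simp
  define e where "e = expectation (\<lambda>\<omega>. \<bar>\<epsilon> 1 \<omega>\<bar>)"
  have ei: "integrable M (\<lambda>\<omega>. \<bar>\<epsilon> (Suc n) \<omega>\<bar>)" for n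
    using eps_facts(1)[of \<epsilon> "Suc n", OF rv_eps ident int1] by simp
  have ee: "expectation (\<lambda>\<omega>. \<bar>\<epsilon> (Suc n) \<omega>\<bar>) = e" for n
    using eps_facts(2)[of \<epsilon> "Suc n", OF rv_eps ident int1] unfolding e_def by simp
  have e0: "e \<ge> 0" unfolding e_def by simp
  have Y0i: "integrable M Y0"
    by (rule square_integrable_imp_integrable[OF rv_Y0 Y0sq])
  have Yi: "integrable M (Y n)" for n
  proof (induction n)
    case 0 then show ?case using Y0i by (simp add: Y0eq)
  next
    case (Suc n)
    have "integrable M (\<lambda>\<omega>. (\<bar>\<alpha>\<bar>+\<bar>\<beta>\<bar>) * \<bar>Y n \<omega>\<bar> + \<bar>\<epsilon> (Suc n) \<omega>\<bar>)"
      by (rule Bochner_Integration.integrable_add[OF Bochner_Integration.integrable_mult_right[OF Bochner_Integration.integrable_abs[OF Suc]] ei])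
    moreover have "norm (Y (Suc n) \<omega>) \<le> norm ((\<bar>\<alpha>\<bar>+\<bar>\<beta>\<bar>) * \<bar>Y n \<omega>\<bar> + \<bar>\<epsilon> (Suc n) \<omega>\<bar>)" for \<omega>
      using abs_step[of r "Y n \<omega>" \<alpha> \<beta> "\<epsilon> (Suc n) \<omega>"] unfolding Ysuc by simp
    ultimately show ?case by (intro Bochner_Integration.integrable_bound[OF _ Ym AE_I2]) auto
  qed
  define P where "P n \<omega> = max 0 (Y n \<omega>)" for n \<omega>
  define N where "N n \<omega> = max 0 (- Y n \<omega>)" for n \<omega>
  have Pi: "integrable M (P n)" for n
    unfolding P_def by (intro Bochner_Integration.integrable_bound[OF Yi[of n] _ AE_I2]) auto
  have Ni: "integrable M (N n)" for n
    unfolding N_def by (intro Bochner_Integration.integrable_bound[OF Yi[of n] _ AE_I2]) auto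
  define C where "C = \<alpha>*\<bar>r\<bar>+\<bar>\<beta>\<bar>*\<bar>r\<bar>"
  have C0: "C \<ge> 0" using a1 unfolding C_def by simp
  define EN where "EN n = expectation (N n)" for n
  define EP where "EP n = expectation (P n)" for n
  have EN0: "EN n \<ge> 0" for n unfolding EN_def N_def by simp
  have ENrec: "EN (Suc n) \<le> EN n + C + e" for n
  proof -
    have "EN (Suc n) \<le> expectation (\<lambda>\<omega>. N n \<omega> + C + \<bar>\<epsilon> (Suc n) \<omega>\<bar>)"
      unfolding EN_def
    proof (rule integral_mono)
      show "integrable M (N (Suc n))" by (rule Ni)
      show "integrable M (\<lambda>\<omega>. N n \<omega> + C + \<bar>\<epsilon> (Suc n) \<omega>\<bar>)"
        by (intro Bochner_Integration.integrable_add Ni ei integrable_const)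
      show "N (Suc n) \<omega> \<le> N n \<omega> + C + \<bar>\<epsilon> (Suc n) \<omega>\<bar>" for \<omega>
        unfolding N_def C_def Ysuc by (rule neg_step[OF a1 b1])
    qed
    also have "\<dots> = EN n + C + e"
      using Ni ei ee unfolding EN_def by (simp add: Bochner_Integration.integral_add prob_space)
    finally show ?thesis .
  qed
  have ENb: "EN n \<le> EN 0 + n * (C + e)" for n
  proof (induction n)
    case 0 then show ?case by simp
  next
    case (Suc n) then show ?case using ENrec[of n] by (simp add: algebra_simps)
  qed
  have EPrec: "EP (Suc n) \<le> \<alpha> * EP n + (\<bar>\<beta>\<bar>*(C+e)) * n + (\<bar>\<beta>\<bar> * EN 0 + \<bar>\<beta>\<bar>*\<bar>r\<bar> + e)" for n
  proof -
    have "EP (Suc n) \<le> expectation (\<lambda>\<omega>. \<alpha> * P n \<omega> + \<bar>\<beta>\<bar> * N n \<omega> + \<bar>\<beta>\<bar>*\<bar>r\<bar> + \<bar>\<epsilon> (Suc n) \<omega>\<bar>)"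
      unfolding EP_def
    proof (rule integral_mono)
      show "integrable M (P (Suc n))" by (rule Pi)
      show "integrable M (\<lambda>\<omega>. \<alpha> * P n \<omega> + \<bar>\<beta>\<bar> * N n \<omega> + \<bar>\<beta>\<bar>*\<bar>r\<bar> + \<bar>\<epsilon> (Suc n) \<omega>\<bar>)"
        by (intro Bochner_Integration.integrable_add Bochner_Integration.integrable_mult_right Pi Ni ei integrable_const)
      show "P (Suc n) \<omega> \<le> \<alpha> * P n \<omega> + \<bar>\<beta>\<bar> * N n \<omega> + \<bar>\<beta>\<bar>*\<bar>r\<bar> + \<bar>\<epsilon> (Suc n) \<omega>\<bar>" for \<omega>
        unfolding N_def P_def Ysuc by (rule pos_step[OF a1 b1])
    qed
    also have "\<dots> = \<alpha> * EP n + \<bar>\<beta>\<bar> * EN n + \<bar>\<beta>\<bar>*\<bar>r\<bar> + e"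
      using Ni Pi ei ee unfolding EN_def EP_def by (simp add: Bochner_Integration.integral_add prob_space)
    also have "\<dots> \<le> \<alpha> * EP n + \<bar>\<beta>\<bar> * (EN 0 + n * (C + e)) + \<bar>\<beta>\<bar>*\<bar>r\<bar> + e"
      using ENb[of n] by (simp add: mult_left_mono)
    also have "\<dots> = \<alpha> * EP n + (\<bar>\<beta>\<bar>*(C+e)) * n + (\<bar>\<beta>\<bar> * EN 0 + \<bar>\<beta>\<bar>*\<bar>r\<bar> + e)"
      by (simp add: algebra_simps)
    finally show ?thesis .
  qed
  define u where "u = \<bar>\<beta>\<bar>*(C+e)"
  define v where "v = \<bar>\<beta>\<bar> * EN 0 + \<bar>\<beta>\<bar>*\<bar>r\<bar> + e"
  have u0: "u \<ge> 0" unfolding u_def using C0 e0 by simp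
  have v0: "v \<ge> 0" unfolding v_def using EN0[of 0] e0 by simp
  define B where "B = EP 0 + (v + u/(\<alpha>-1))/(\<alpha>-1)"
  have EPb: "EP n \<le> B * \<alpha>^n - u/(\<alpha>-1) * n - (v + u/(\<alpha>-1))/(\<alpha>-1)" for n
    unfolding B_def by (rule geom_bound[OF a1 u0 v0]) (use EPrec u_def v_def in simp)
  have q0: "u/(\<alpha>-1) * real n \<ge> 0" "(v + u/(\<alpha>-1))/(\<alpha>-1) \<ge> 0" for n using a1 u0 v0 by (auto intro!: divide_nonneg_pos mult_nonneg_nonneg add_nonneg_nonneg)
  have bern: "real n \<le> \<alpha>^n / (\<alpha>-1)" for n
  proof -
    have "1 + real n * (\<alpha>-1) \<le> (1 + (\<alpha>-1))^n" by (rule Bernoulli_inequality) (use a1 in simp)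
    then have "real n * (\<alpha>-1) \<le> \<alpha>^n" by simp
    then show ?thesis using a1 by (simp add: field_simps)
  qed
  have apos: "\<alpha>^n > 0" for n using a1 by simp
  define K where "K = \<bar>B\<bar> + EN 0 + (C + e)/(\<alpha>-1)"
  have main: "expectation (\<lambda>\<omega>. \<bar>Y n \<omega>\<bar>) \<le> K * \<alpha>^n" for n
  proof -
    have "expectation (\<lambda>\<omega>. \<bar>Y n \<omega>\<bar>) = expectation (\<lambda>\<omega>. P n \<omega> + N n \<omega>)"
      unfolding P_def N_def by (intro Bochner_Integration.integral_cong) auto
    also have "\<dots> = EP n + EN n" using Pi Ni unfolding EP_def EN_def by simp
    also have "\<dots> \<le> B * \<alpha>^n + (EN 0 + n * (C + e))" using EPb[of n] ENb[of n] q0(1)[of n] q0(2) by linarith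
    also have "\<dots> \<le> \<bar>B\<bar> * \<alpha>^n + (EN 0 * \<alpha>^n + (\<alpha>^n / (\<alpha>-1)) * (C + e))"
    proof -
      have "B * \<alpha>^n \<le> \<bar>B\<bar> * \<alpha>^n" using apos[of n] by (intro mult_right_mono) auto
      moreover have "EN 0 \<le> EN 0 * \<alpha>^n" using EN0[of 0] a1 mult_left_mono[of 1 "\<alpha>^n" "EN 0"] by (simp add: one_le_power)
      moreover have "n * (C + e) \<le> (\<alpha>^n / (\<alpha>-1)) * (C + e)" using bern[of n] C0 e0 by (intro mult_right_mono) auto
      ultimately show ?thesis by linarith
    qed
    also have "\<dots> = K * \<alpha>^n" unfolding K_def by (simp add: algebra_simps)
    finally show ?thesis .
  qed
  have "(\<lambda>n. expectation (\<lambda>\<omega>. \<bar>Y n \<omega>\<bar>)) \<in> O(\<lambda>n. \<alpha> ^ n)"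
  proof (rule bigoI[where c=K])
    show "\<forall>\<^sub>F n in at_top. norm (expectation (\<lambda>\<omega>. \<bar>Y n \<omega>\<bar>)) \<le> K * norm (\<alpha>^n)"
    proof (rule always_eventually, rule allI)
      fix n
      have "expectation (\<lambda>\<omega>. \<bar>Y n \<omega>\<bar>) \<ge> 0" by simp
      then show "norm (expectation (\<lambda>\<omega>. \<bar>Y n \<omega>\<bar>)) \<le> K * norm (\<alpha>^n)"
        using main[of n] apos[of n] by simp
    qed
  qed
  then show ?thesis using Yi unfolding Y_def by simp
qed

end



lemma limsup_inf_ex:
  assumes "limsup (\<lambda>n. ereal (f n)) = \<infinity>"
  shows "\<exists>n. f n > K"
proof (rule ccontr)
  assume "\<not> (\<exists>n. f n > K)"
  then have "\<forall>n. ereal (f n) \<le> ereal K" by (simp add: not_less)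
  then have "limsup (\<lambda>n. ereal (f n)) \<le> ereal K"
    by (intro Limsup_bounded always_eventually) auto
  with assms show False by simp
qed

lemma growth:
  fixes \<alpha> \<beta> r K :: real
  assumes a1: "\<alpha> > 1" and K0: "K > 0" "K > r"
    and Ym: "tar \<alpha> \<beta> r Y0 \<epsilon> m \<omega> > K"
    and ep: "\<forall>j. \<epsilon> (m+1+j) \<omega> \<ge> -((\<alpha>-1)/2)*K*((\<alpha>+1)/2)^j"
  shows "tar \<alpha> \<beta> r Y0 \<epsilon> (m+j) \<omega> \<ge> K*((\<alpha>+1)/2)^j"
proof (induction j)
  case 0 then show ?case using Ym by simp
next
  case (Suc j)
  define g where "g = (\<alpha>+1)/2"
  define y where "y = tar \<alpha> \<beta> r Y0 \<epsilon> (m+j) \<omega>"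
  have g1: "g \<ge> 1" using a1 unfolding g_def by simp
  have IH: "y \<ge> K*g^j" using Suc unfolding y_def g_def by simp
  have "K*g^j \<ge> K" using g1 K0 by (simp add: one_le_power)
  then have yr: "y > r" using IH K0 by linarith
  have Kg: "K*g^j > 0" using K0 g1 by simp
  have e: "\<epsilon> (Suc (m+j)) \<omega> \<ge> -((\<alpha>-1)/2)*(K*g^j)" using ep[rule_format, of j] unfolding g_def by simp
  have "tar \<alpha> \<beta> r Y0 \<epsilon> (m + Suc j) \<omega> = \<alpha> * y + \<epsilon> (Suc (m+j)) \<omega>"
    using yr unfolding y_def by simp
  also have "\<dots> \<ge> \<alpha> * y - ((\<alpha>-1)/2)*(K*g^j)" using e by simp
  also have "\<alpha> * y - ((\<alpha>-1)/2)*(K*g^j) \<ge> \<alpha> * y - ((\<alpha>-1)/2)*y"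
    using IH a1 by (intro diff_left_mono mult_left_mono) auto
  also have "\<alpha> * y - ((\<alpha>-1)/2)*y = g * y" unfolding g_def by (simp add: field_simps)
  also have "g * y \<ge> g * (K*g^j)" using IH g1 by (intro mult_left_mono) auto
  finally show ?case unfolding g_def by (simp add: algebra_simps)
qed

lemma growth_lim:
  fixes \<alpha> \<beta> r K :: real
  assumes a1: "\<alpha> > 1" and K0: "K > 0" "K > r"
    and Ym: "tar \<alpha> \<beta> r Y0 \<epsilon> m \<omega> > K"
    and ep: "\<forall>j. \<epsilon> (m+1+j) \<omega> \<ge> -((\<alpha>-1)/2)*K*((\<alpha>+1)/2)^j"
  shows "filterlim (\<lambda>n. tar \<alpha> \<beta> r Y0 \<epsilon> n \<omega> / real n) at_top sequentially"
proof -
  define g where "g = (\<alpha>+1)/2"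
  have g1: "g > 1" using a1 unfolding g_def by simp
  have K': "K / g^m > 0" using K0 g1 by simp
  have lim: "filterlim (\<lambda>n::nat. (K / g^m) * g^n / real n) at_top at_top"
    using g1 K' by real_asymp
  show ?thesis
  proof (rule filterlim_at_top_mono[OF lim])
    show "\<forall>\<^sub>F n in sequentially. K / g ^ m * g ^ n / real n \<le> tar \<alpha> \<beta> r Y0 \<epsilon> n \<omega> / real n"
    proof (rule eventually_sequentiallyI[of "m+1"])
      fix n assume n: "m + 1 \<le> n"
      then obtain j where nj: "n = m + j" by (metis add_leD1 le_add_diff_inverse)
      have "K * g^j \<le> tar \<alpha> \<beta> r Y0 \<epsilon> n \<omega>"
        using growth[OF a1 K0 Ym ep, of j] nj unfolding g_def by simp
      moreover have "K / g ^ m * g ^ n = K * g^j" using g1 nj by (simp add: power_add field_simps)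
      ultimately show "K / g ^ m * g ^ n / real n \<le> tar \<alpha> \<beta> r Y0 \<epsilon> n \<omega> / real n"
        using n by (simp add: divide_right_mono)
    qed
  qed
qed




context prob_space begin

lemma tail_bound:
  fixes \<epsilon> :: "nat \<Rightarrow> 'a \<Rightarrow> real"
  assumes rv_eps: "\<And>t. t \<ge> 1 \<Longrightarrow> \<epsilon> t \<in> borel_measurable M"
    and ident: "\<And>t. t \<ge> 1 \<Longrightarrow> distr M borel (\<epsilon> t) = distr M borel (\<epsilon> 1)"
    and int2: "integrable M (\<lambda>\<omega>. (\<epsilon> 1 \<omega>)\<^sup>2)"
    and t: "t \<ge> 1" and x: "x > 0"
  shows "prob {\<omega>\<in>space M. \<epsilon> t \<omega> < -x} \<le> expectation (\<lambda>\<omega>. (\<epsilon> 1 \<omega>)\<^sup>2) / x\<^sup>2"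
proof -
  have m1[measurable]: "\<epsilon> 1 \<in> borel_measurable M" using rv_eps[of 1] by simp
  have mt[measurable]: "\<epsilon> t \<in> borel_measurable M" using rv_eps[OF t] .
  have S: "{..< -x} \<in> sets borel" by simp
  have "prob {\<omega>\<in>space M. \<epsilon> t \<omega> < -x} = measure (distr M borel (\<epsilon> t)) {..< -x}"
    using measure_distr[OF mt S] by (simp add: vimage_def Int_def conj_commute)
  also have "\<dots> = measure (distr M borel (\<epsilon> 1)) {..< -x}" unfolding ident[OF t] ..
  also have "\<dots> = prob {\<omega>\<in>space M. \<epsilon> 1 \<omega> < -x}"
    using measure_distr[OF m1 S] by (simp add: vimage_def Int_def conj_commute)
  also have "\<dots> \<le> prob {\<omega>\<in>space M. (\<epsilon> 1 \<omega>)\<^sup>2 \<ge> x\<^sup>2}"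
  proof (rule finite_measure_mono)
    show "{\<omega>\<in>space M. (\<epsilon> 1 \<omega>)\<^sup>2 \<ge> x\<^sup>2} \<in> events" by measurable
    show "{\<omega>\<in>space M. \<epsilon> 1 \<omega> < -x} \<subseteq> {\<omega>\<in>space M. (\<epsilon> 1 \<omega>)\<^sup>2 \<ge> x\<^sup>2}"
    proof safe
      fix \<omega> assume "\<epsilon> 1 \<omega> < -x"
      then have "x \<le> \<bar>\<epsilon> 1 \<omega>\<bar>" using x by simp
      then show "x\<^sup>2 \<le> (\<epsilon> 1 \<omega>)\<^sup>2" using x by (metis abs_le_square_iff abs_of_pos)
    qed
  qed
  also have "\<dots> \<le> expectation (\<lambda>\<omega>. (\<epsilon> 1 \<omega>)\<^sup>2) / x\<^sup>2"
    by (rule integral_Markov_inequality_measure[OF int2, of "space M"]) (use x in auto)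
  finally show ?thesis .
qed

end

definition gtar :: "real \<Rightarrow> real \<Rightarrow> real \<Rightarrow> (nat \<Rightarrow> real) \<Rightarrow> nat \<Rightarrow> real" where
  "gtar \<alpha> \<beta> r x k = tar \<alpha> \<beta> r (\<lambda>_::unit. x 0) (\<lambda>t _. x t) k ()"

lemma gtar_meas:
  assumes "k \<le> m"
  shows "(\<lambda>x. gtar \<alpha> \<beta> r x k) \<in> borel_measurable (PiM {..m} (\<lambda>_. borel))"
  using assms
proof (induction k)
  case 0
  have "(\<lambda>x. x 0) \<in> borel_measurable (PiM {..m} (\<lambda>_. borel))"
    by (rule measurable_component_singleton) simp
  then show ?case by (simp add: gtar_def)
next
  case (Suc k)
  have [measurable]: "(\<lambda>x. gtar \<alpha> \<beta> r x k) \<in> borel_measurable (PiM {..m} (\<lambda>_. borel))"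
    using Suc by simp
  have [measurable]: "(\<lambda>x. x (Suc k)) \<in> borel_measurable (PiM {..m} (\<lambda>_. borel))"
    by (rule measurable_component_singleton) (use Suc in simp)
  have eq: "(\<lambda>x. gtar \<alpha> \<beta> r x (Suc k)) = (\<lambda>x. (if gtar \<alpha> \<beta> r x k > r then \<alpha> * gtar \<alpha> \<beta> r x k else \<beta> * gtar \<alpha> \<beta> r x k) + x (Suc k))"
    by (simp add: gtar_def fun_eq_iff)
  show ?case unfolding eq by measurable
qed

lemma gtar_Suc: "gtar \<alpha> \<beta> r x (Suc k) = (if gtar \<alpha> \<beta> r x k > r then \<alpha> * gtar \<alpha> \<beta> r x k else \<beta> * gtar \<alpha> \<beta> r x k) + x (Suc k)"
  by (simp add: gtar_def)

lemma gtar_eq: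
  assumes "k \<le> m" and x: "\<And>i. i \<le> m \<Longrightarrow> x i = (if i = 0 then Y0 else \<epsilon> i) \<omega>"
  shows "tar \<alpha> \<beta> r Y0 \<epsilon> k \<omega> = gtar \<alpha> \<beta> r x k"
  using assms(1)
proof (induction k)
  case 0 then show ?case using x[of 0] by (simp add: gtar_def)
next
  case (Suc k)
  then have IH: "tar \<alpha> \<beta> r Y0 \<epsilon> k \<omega> = gtar \<alpha> \<beta> r x k" by simp
  show ?case using Suc(2) x[of "Suc k"] by (simp add: IH gtar_Suc)
qed

context prob_space begin

lemma indep_AG:
  fixes \<epsilon> :: "nat \<Rightarrow> 'a \<Rightarrow> real"
  assumes indep: "indep_vars (\<lambda>_. borel) (\<lambda>t. if t = 0 then Y0 else \<epsilon> t) UNIV"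
  shows "prob ({\<omega>\<in>space M. tar \<alpha> \<beta> r Y0 \<epsilon> m \<omega> > K \<and> (\<forall>k<m. tar \<alpha> \<beta> r Y0 \<epsilon> k \<omega> \<le> K)} \<inter> {\<omega>\<in>space M. \<epsilon> (m+1+j) \<omega> < z})
     = prob {\<omega>\<in>space M. tar \<alpha> \<beta> r Y0 \<epsilon> m \<omega> > K \<and> (\<forall>k<m. tar \<alpha> \<beta> r Y0 \<epsilon> k \<omega> \<le> K)} * prob {\<omega>\<in>space M. \<epsilon> (m+1+j) \<omega> < z}"
proof -
  define X where "X = (\<lambda>t. if t = 0 then Y0 else \<epsilon> t)"
  define RA where "RA \<omega> = restrict (\<lambda>i. X i \<omega>) {..m}" for \<omega>
  define RB where "RB \<omega> = restrict (\<lambda>i. X i \<omega>) {m+1+j}" for \<omega>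
  have iv: "indep_var (PiM {..m} (\<lambda>_. borel)) RA (PiM {m+1+j} (\<lambda>_. borel)) RB"
    unfolding RA_def RB_def
    by (rule indep_var_restrict[OF indep[folded X_def]]) auto
  define Sa where "Sa = {x\<in>space (PiM {..m} (\<lambda>_. borel)). gtar \<alpha> \<beta> r x m > K \<and> (\<forall>k<m. gtar \<alpha> \<beta> r x k \<le> K)}"
  define Sb where "Sb = {x\<in>space (PiM {m+1+j} (\<lambda>_. borel)::(nat \<Rightarrow> real) measure). x (m+1+j) < z}"
  have [measurable]: "(\<lambda>x. gtar \<alpha> \<beta> r x k) \<in> borel_measurable (PiM {..m} (\<lambda>_. borel))" if "k \<le> m" for k
    using gtar_meas[OF that] .
  have Sa: "Sa \<in> sets (PiM {..m} (\<lambda>_. borel))"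
  proof -
    define S' where "S' k = {x\<in>space (PiM {..m} (\<lambda>_. borel)). if k = m then gtar \<alpha> \<beta> r x m > K else gtar \<alpha> \<beta> r x k \<le> K}" for k
    have "Sa = (\<Inter>k\<in>{..m}. S' k)"
      unfolding Sa_def S'_def by (auto simp: less_le)
    also have "\<dots> \<in> sets (PiM {..m} (\<lambda>_. borel))"
    proof (intro sets.finite_INT)
      fix k assume "k \<in> {..m}"
      then have k: "k \<le> m" by simp
      show "S' k \<in> sets (PiM {..m} (\<lambda>_. borel))"
      proof (cases "k = m")
        case True
        then show ?thesis unfolding S'_def using gtar_meas[of m m] by simp measurable
      next
        case False
        then show ?thesis unfolding S'_def using gtar_meas[OF k] by simp measurable
      qed
    qed auto
    finally show ?thesis .
  qed
  have Sb: "Sb \<in> sets (PiM {m+1+j} (\<lambda>_. borel))"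
  proof -
    have [measurable]: "(\<lambda>x. x (m+1+j)) \<in> borel_measurable (PiM {m+1+j} (\<lambda>_. borel))"
      by (rule measurable_component_singleton) simp
    show ?thesis unfolding Sb_def by measurable
  qed
  have sA: "RA \<omega> \<in> space (PiM {..m} (\<lambda>_. borel))" for \<omega> unfolding RA_def by (simp add: space_PiM)
  have sB: "RB \<omega> \<in> space (PiM {m+1+j} (\<lambda>_. borel))" for \<omega> unfolding RB_def by (simp add: space_PiM)
  have eqA: "RA -` Sa \<inter> space M = {\<omega>\<in>space M. tar \<alpha> \<beta> r Y0 \<epsilon> m \<omega> > K \<and> (\<forall>k<m. tar \<alpha> \<beta> r Y0 \<epsilon> k \<omega> \<le> K)}"
  proof -
    have "tar \<alpha> \<beta> r Y0 \<epsilon> k \<omega> = gtar \<alpha> \<beta> r (RA \<omega>) k" if "k \<le> m" for k \<omega>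
      by (rule gtar_eq[OF that]) (simp add: RA_def X_def)
    then show ?thesis using sA unfolding Sa_def by auto
  qed
  have eqB: "RB -` Sb \<inter> space M = {\<omega>\<in>space M. \<epsilon> (m+1+j) \<omega> < z}"
    using sB unfolding Sb_def RB_def X_def by auto
  have eqAB: "(\<lambda>\<omega>. (RA \<omega>, RB \<omega>)) -` (Sa \<times> Sb) \<inter> space M = (RA -` Sa \<inter> space M) \<inter> (RB -` Sb \<inter> space M)"
    by auto
  show ?thesis using indep_varD[OF iv Sa Sb] unfolding eqAB eqA eqB .
qed

end




context prob_space begin

lemma part2:
  fixes \<epsilon> :: "nat \<Rightarrow> 'a \<Rightarrow> real"
  assumes rv_eps: "\<And>t. t \<ge> 1 \<Longrightarrow> \<epsilon> t \<in> borel_measurable M"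
    and rv_Y0: "Y0 \<in> borel_measurable M"
    and indep: "indep_vars (\<lambda>_. borel) (\<lambda>t. if t = 0 then Y0 else \<epsilon> t) UNIV"
    and ident: "\<And>t. t \<ge> 1 \<Longrightarrow> distr M borel (\<epsilon> t) = distr M borel (\<epsilon> 1)"
    and int2: "integrable M (\<lambda>\<omega>. (\<epsilon> 1 \<omega>)\<^sup>2)"
    and a1: "\<alpha> > 1"
  shows "(AE \<omega> in M. limsup (\<lambda>n. ereal (tar \<alpha> \<beta> r Y0 \<epsilon> n \<omega>)) = \<infinity>) \<longrightarrow>
         (AE \<omega> in M. filterlim (\<lambda>n. tar \<alpha> \<beta> r Y0 \<epsilon> n \<omega> / real n) at_top sequentially)"
proof
  assume hyp: "AE \<omega> in M. limsup (\<lambda>n. ereal (tar \<alpha> \<beta> r Y0 \<epsilon> n \<omega>)) = \<infinity>"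
  define Y where "Y = tar \<alpha> \<beta> r Y0 \<epsilon>"
  have Ym[measurable]: "Y n \<in> borel_measurable M" for n
    unfolding Y_def by (rule tar_meas) (auto intro: rv_eps rv_Y0)
  have em[measurable]: "\<epsilon> (Suc n) \<in> borel_measurable M" for n using rv_eps by simp
  define c where "c = (\<alpha>-1)/2"
  define g where "g = (\<alpha>+1)/2"
  have c0: "c > 0" and g1: "g > 1" using a1 unfolding c_def g_def by auto
  define s2 where "s2 = expectation (\<lambda>\<omega>. (\<epsilon> 1 \<omega>)\<^sup>2)"
  have s20: "s2 \<ge> 0" unfolding s2_def by simp
  define A where "A K m = {\<omega>\<in>space M. Y m \<omega> > K \<and> (\<forall>k<m. Y k \<omega> \<le> K)}" for K m
  define G where "G K m j = {\<omega>\<in>space M. \<epsilon> (m+1+j) \<omega> < -(c*K*g^j)}" for K m j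
  define NK where "NK K = (\<Union>m. \<Union>j. A K m \<inter> G K m j)" for K
  have Aev[measurable]: "A K m \<in> events" for K m unfolding A_def by measurable
  have Gev[measurable]: "G K m j \<in> events" for K m j
  proof -
    have "\<epsilon> (Suc (m+j)) \<in> borel_measurable M" by (rule em)
    then show ?thesis unfolding G_def by simp measurable
  qed
  have NKev: "NK K \<in> events" for K unfolding NK_def by measurable
  have cover: "\<omega> \<in> NK K"
    if K: "K > 0" "K > r" and \<omega>: "\<omega> \<in> space M"
      and ls: "limsup (\<lambda>n. ereal (Y n \<omega>)) = \<infinity>"
      and nl: "\<not> filterlim (\<lambda>n. Y n \<omega> / real n) at_top sequentially" for K \<omega>
  proof -
    have ex: "\<exists>n. Y n \<omega> > K" by (rule limsup_inf_ex[OF ls])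
    define m where "m = (LEAST n. Y n \<omega> > K)"
    have m1: "Y m \<omega> > K" unfolding m_def by (rule LeastI_ex[OF ex])
    have m2: "\<forall>k<m. Y k \<omega> \<le> K" unfolding m_def using not_less_Least[where P="\<lambda>n. Y n \<omega> > K"] by (auto simp: not_less)
    have "\<exists>j. \<epsilon> (m+1+j) \<omega> < -(c*K*g^j)"
    proof (rule ccontr)
      assume "\<not> ?thesis"
      then have "\<forall>j. \<epsilon> (m+1+j) \<omega> \<ge> -((\<alpha>-1)/2)*K*((\<alpha>+1)/2)^j"
        unfolding c_def g_def by (auto simp: not_less)
      from growth_lim[OF a1 K m1[unfolded Y_def] this] nl show False unfolding Y_def by simp
    qed
    then obtain j where "\<epsilon> (m+1+j) \<omega> < -(c*K*g^j)" by blast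
    then have "\<omega> \<in> A K m \<inter> G K m j" unfolding A_def G_def using \<omega> m1 m2 by auto
    then show ?thesis unfolding NK_def by blast
  qed
  define Q where "Q K = s2 / (c*K)^2 * (1 / (1 - 1/g^2))" for K
  have Q0: "Q K \<ge> 0" for K
  proof -
    have "1/g^2 < 1" using g1 by (simp add: power_less_one_iff)
    then show ?thesis unfolding Q_def using s20 by simp
  qed
  have disj: "disjoint_family (A K)" for K
  proof (unfold disjoint_family_on_def, intro ballI impI)
    fix m n :: nat assume "m \<noteq> n"
    then consider "m < n" | "n < m" by linarith
    then show "A K m \<inter> A K n = {}"
      by cases (auto simp: A_def not_less[symmetric])
  qed
  have bound: "measure M (NK K) \<le> Q K" if K: "K > 0" for K
  proof -
    define q where "q j = s2/(c*K)^2 * (1/g^2)^j" for j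
    have q0: "q j \<ge> 0" for j unfolding q_def using s20 g1 by simp
    have qs: "q sums Q K"
    proof -
      have "norm (1/g^2) < 1" using g1 by (simp add: power_less_one_iff)
      from sums_mult[OF geometric_sums[OF this], of "s2/(c*K)^2"]
      show ?thesis unfolding q_def Q_def .
    qed
    have pG: "prob (G K m j) \<le> q j" for m j
    proof -
      have x: "c*K*g^j > 0" using c0 K g1 by simp
      have "prob (G K m j) \<le> s2 / (c*K*g^j)\<^sup>2"
        unfolding G_def s2_def by (rule tail_bound[of \<epsilon> "m+1+j", OF rv_eps ident int2 _ x]) auto
      also have "s2 / (c*K*g^j)\<^sup>2 = q j"
        unfolding q_def using g1 by (simp add: power_mult_distrib power_divide field_simps power_mult[symmetric] mult.commute)
      finally show ?thesis .
    qed
    have pAG: "emeasure M (A K m \<inter> G K m j) \<le> ennreal (prob (A K m)) * ennreal (q j)" for m j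
    proof -
      have "prob (A K m \<inter> G K m j) = prob (A K m) * prob (G K m j)"
        unfolding A_def G_def Y_def by (rule indep_AG[OF indep])
      also have "\<dots> \<le> prob (A K m) * q j" using pG by (intro mult_left_mono) auto
      finally have "ennreal (prob (A K m \<inter> G K m j)) \<le> ennreal (prob (A K m) * q j)" by (rule ennreal_leI)
      then show ?thesis by (simp add: emeasure_eq_measure ennreal_mult q0)
    qed
    have "emeasure M (NK K) \<le> (\<Sum>m. emeasure M (\<Union>j. A K m \<inter> G K m j))"
      unfolding NK_def by (rule emeasure_subadditive_countably) auto
    also have "\<dots> \<le> (\<Sum>m. \<Sum>j. emeasure M (A K m \<inter> G K m j))"
      by (intro suminf_le summableI emeasure_subadditive_countably) auto
    also have "\<dots> \<le> (\<Sum>m. \<Sum>j. ennreal (prob (A K m)) * ennreal (q j))"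
      by (intro suminf_le summableI pAG)
    also have "\<dots> = (\<Sum>m. ennreal (prob (A K m)) * ennreal (Q K))"
    proof -
      have "(\<Sum>j. ennreal (q j)) = ennreal (Q K)"
        using suminf_ennreal2[OF q0 sums_summable[OF qs]] sums_unique[OF qs] by simp
      then show ?thesis by simp
    qed
    also have "\<dots> = ennreal (Q K) * (\<Sum>m. emeasure M (A K m))"
      by (simp add: emeasure_eq_measure mult.commute)
    also have "\<dots> = ennreal (Q K) * emeasure M (\<Union>m. A K m)"
    proof -
      have "range (A K) \<subseteq> sets M" using Aev by auto
      from suminf_emeasure[OF this disj] show ?thesis by simp
    qed
    also have "\<dots> \<le> ennreal (Q K) * 1"
      by (intro mult_left_mono emeasure_le_1) auto
    finally have "ennreal (measure M (NK K)) \<le> ennreal (Q K)" by (simp add: emeasure_eq_measure)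
    then show ?thesis using Q0 by simp
  qed
  define K0 where "K0 = max r 0 + 1"
  have K0p: "K0 > 0" "K0 > r" unfolding K0_def by auto
  define N where "N = (\<Inter>i. NK (K0 + real i))"
  have Nev: "N \<in> events" unfolding N_def using NKev by auto
  have "measure M N \<le> 0"
  proof (rule LIMSEQ_le_const)
    define D where "D = s2 / c^2 * (1 / (1 - 1/g^2))"
    have QD: "Q K = D / K^2" if "K > 0" for K
      unfolding Q_def D_def using that c0 by (simp add: power_mult_distrib field_simps)
    have "(\<lambda>i. D / (K0 + real i)^2) \<longlonglongrightarrow> 0" using K0p by real_asymp
    then show "(\<lambda>i. Q (K0 + real i)) \<longlonglongrightarrow> 0"
      by (rule Lim_transform_eventually) (use K0p QD in \<open>auto intro!: always_eventually\<close>)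
    show "\<exists>n0. \<forall>n\<ge>n0. measure M N \<le> Q (K0 + real n)"
    proof (intro exI allI impI)
      fix n :: nat
      have "measure M N \<le> measure M (NK (K0 + real n))"
        unfolding N_def by (rule finite_measure_mono) (auto intro: NKev)
      also have "\<dots> \<le> Q (K0 + real n)" using K0p by (intro bound) simp
      finally show "measure M N \<le> Q (K0 + real n)" .
    qed
  qed
  then have "measure M N = 0" using measure_nonneg[of M N] by linarith
  then have Nnull: "N \<in> null_sets M" using Nev by (simp add: emeasure_eq_measure null_setsI)
  have "AE \<omega> in M. limsup (\<lambda>n. ereal (Y n \<omega>)) = \<infinity> \<longrightarrow> filterlim (\<lambda>n. Y n \<omega> / real n) at_top sequentially"
  proof (rule AE_I'[OF Nnull], rule subsetI)
    fix \<omega> assume "\<omega> \<in> {\<omega>\<in>space M. \<not> (limsup (\<lambda>n. ereal (Y n \<omega>)) = \<infinity> \<longrightarrow> filterlim (\<lambda>n. Y n \<omega> / real n) at_top sequentially)}"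
    then have \<omega>: "\<omega> \<in> space M" and ls: "limsup (\<lambda>n. ereal (Y n \<omega>)) = \<infinity>"
      and nl: "\<not> filterlim (\<lambda>n. Y n \<omega> / real n) at_top sequentially" by auto
    show "\<omega> \<in> N" unfolding N_def
    proof
      fix i :: nat
      have "K0 + real i > 0" "K0 + real i > r" using K0p by auto
      then show "\<omega> \<in> NK (K0 + real i)" by (rule cover[OF _ _ \<omega> ls nl])
    qed
  qed
  then show "AE \<omega> in M. filterlim (\<lambda>n. tar \<alpha> \<beta> r Y0 \<epsilon> n \<omega> / real n) at_top sequentially"
    using hyp unfolding Y_def by eventually_elim auto
qed

end

theorem lemma4p1:
  fixes M :: "'a measure" and \<epsilon> :: "nat \<Rightarrow> 'a \<Rightarrow> real" and Y0 :: "'a \<Rightarrow> real"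
    and \<alpha> \<beta> r :: real
  assumes "prob_space M"
    and rv_eps: "\<And>t. t \<ge> 1 \<Longrightarrow> \<epsilon> t \<in> borel_measurable M"
    and rv_Y0: "Y0 \<in> borel_measurable M"
    and indep: "prob_space.indep_vars M (\<lambda>_. borel) (\<lambda>t. if t = 0 then Y0 else \<epsilon> t) UNIV"
    and ident: "\<And>t. t \<ge> 1 \<Longrightarrow> distr M borel (\<epsilon> t) = distr M borel (\<epsilon> 1)"
    and int1: "integrable M (\<epsilon> 1)"
    and mean0: "prob_space.expectation M (\<epsilon> 1) = 0"
    and int2: "integrable M (\<lambda>\<omega>. (\<epsilon> 1 \<omega>)\<^sup>2)"
    and varpos: "prob_space.expectation M (\<lambda>\<omega>. (\<epsilon> 1 \<omega>)\<^sup>2) > 0"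
    and Y0sq: "integrable M (\<lambda>\<omega>. (Y0 \<omega>)\<^sup>2)"
    and hyp: "(\<alpha> > 1 \<and> \<beta> \<le> 1 \<and> r = 0) \<or>
              (\<alpha> > 1 \<and> \<beta> \<le> 1 \<and> r \<noteq> 0 \<and>
                 (\<forall>x. prob_space.prob M {\<omega> \<in> space M. \<epsilon> 1 \<omega> \<le> x} < 1))"
  defines "Y \<equiv> tar \<alpha> \<beta> r Y0 \<epsilon>"
  shows "((\<forall>n. integrable M (Y n)) \<and>
          (\<lambda>n. prob_space.expectation M (\<lambda>\<omega>. \<bar>Y n \<omega>\<bar>)) \<in> O(\<lambda>n. \<alpha> ^ n)) \<and>
         ((AE \<omega> in M. limsup (\<lambda>n. ereal (Y n \<omega>)) = \<infinity>) \<longrightarrow>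
         (AE \<omega> in M. filterlim (\<lambda>n. Y n \<omega> / real n) at_top sequentially))"
proof -
  interpret prob_space M by (rule assms(1))
  have a1: "\<alpha> > 1" and b1: "\<beta> \<le> 1" using hyp by auto
  have P1: "(\<forall>n. integrable M (tar \<alpha> \<beta> r Y0 \<epsilon> n)) \<and>
          (\<lambda>n. expectation (\<lambda>\<omega>. \<bar>tar \<alpha> \<beta> r Y0 \<epsilon> n \<omega>\<bar>)) \<in> O(\<lambda>n. \<alpha> ^ n)"
    by (rule part1[of \<epsilon>, OF rv_eps rv_Y0 ident int1 Y0sq a1 b1])
  have P2: "(AE \<omega> in M. limsup (\<lambda>n. ereal (tar \<alpha> \<beta> r Y0 \<epsilon> n \<omega>)) = \<infinity>) \<longrightarrow>
         (AE \<omega> in M. filterlim (\<lambda>n. tar \<alpha> \<beta> r Y0 \<epsilon> n \<omega> / real n) at_top sequentially)"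
    by (rule part2[of \<epsilon>, OF rv_eps rv_Y0 indep ident int2 a1])
  show ?thesis unfolding Y_def using P1 P2 by blast
qed

end
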